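(* Let $p\in(1,2)$ and let $u$ be an ancient solution of the half-space problem $u_t-\Delta u=|\nabla u|^p$ in $\mathbb{R}^n_+\times(-\infty,0)$, $u=0$ on $\partial\mathbb{R}^n_+\times(-\infty,0)$. Assume that for each $\varepsilon>0$, $$\inf_{\Gamma_R\times(-\infty,-\varepsilon]}u=o(R)\quad\text{as }R\to\infty.$$ Then $u\ge0$.
   Context: $\mathbb{R}^n_+:=\{x\in\mathbb{R}^n: x_n>0\}$, $\Gamma_R:=\{x\in\mathbb{R}^n: 0<x_n<R\}$. An ancient solution of the half-space problem is a function $u\in C^{2,1}(Q)\cap C(\overline Q)$, $Q=\mathbb{R}^n_+\times(-\infty,0)$, satisfying the PDE pointwise in $Q$ and $u=0$ pointwise on $\partial\mathbb{R}^n_+\times(-\infty,0)$. *)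

theory Defs
  imports "HOL-Analysis.Analysis"
begin

text \<open>Points of R^n are vectors x :: real^'n; the distinguished coordinate k plays the
role of x_n.  Q = R^n_+ x (-inf,0) with R^n_+ = {x. x$k > 0}.\<close>

definition halfQ :: "'n::finite \<Rightarrow> ((real^'n) \<times> real) set" where
  "halfQ k = {(x,t). x $ k > 0 \<and> t < 0}"

definition halfQ_closure :: "'n::finite \<Rightarrow> ((real^'n) \<times> real) set" where
  "halfQ_closure k = {(x,t). x $ k \<ge> 0 \<and> t \<le> 0}"

definition ancient_half_space_solution ::
  "real \<Rightarrow> 'n::finite \<Rightarrow> (real^'n \<Rightarrow> real \<Rightarrow> real) \<Rightarrow> bool" where
  "ancient_half_space_solution p k u \<longleftrightarrow>
     (\<exists>g :: real^'n \<Rightarrow> real \<Rightarrow> real^'n.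
      \<exists>H :: real^'n \<Rightarrow> real \<Rightarrow> real^'n^'n.
      \<exists>ut :: real^'n \<Rightarrow> real \<Rightarrow> real.
        (\<forall>(x,t)\<in>halfQ k.
            ((\<lambda>y. u y t) has_derivative (\<lambda>h. g x t \<bullet> h)) (at x) \<and>
            ((\<lambda>y. g y t) has_derivative (\<lambda>h. H x t *v h)) (at x) \<and>
            ((\<lambda>s. u x s) has_real_derivative ut x t) (at t)) \<and>
        continuous_on (halfQ k) (\<lambda>(x,t). g x t) \<and>
        continuous_on (halfQ k) (\<lambda>(x,t). H x t) \<and>
        continuous_on (halfQ k) (\<lambda>(x,t). ut x t) \<and>
        continuous_on (halfQ_closure k) (\<lambda>(x,t). u x t) \<and>
        (\<forall>(x,t)\<in>halfQ k.
            ut x t - (\<Sum>i\<in>UNIV. H x t $ i $ i) = norm (g x t) powr p) \<and>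
        (\<forall>x t. x $ k = 0 \<and> t < 0 \<longrightarrow> u x t = 0))"

text \<open>The set Gamma_R x (-inf,-eps] on which the infimum is taken.\<close>
definition strip_set :: "'n::finite \<Rightarrow> real \<Rightarrow> real \<Rightarrow> ((real^'n) \<times> real) set" where
  "strip_set k R \<epsilon> = {(x,t). 0 < x $ k \<and> x $ k < R \<and> t \<le> -\<epsilon>}"

end

theory Submission
  imports Defs
begin


lemma max_second_deriv:
  fixes f f' :: "real \<Rightarrow> real"
  assumes d: "d > 0"
   and df: "\<And>s. \<bar>s\<bar> < d \<Longrightarrow> (f has_real_derivative f' s) (at s)"
   and d2: "(f' has_real_derivative c) (at 0)"
   and mx: "\<And>s. \<bar>s\<bar> < d \<Longrightarrow> f s \<le> f 0"
  shows "c \<le> 0"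
proof (rule ccontr)
  assume "\<not> c \<le> 0" hence c: "c > 0" by simp
  have f'0: "f' 0 = 0"
    using DERIV_local_max[OF df[of 0] d] mx d by auto
  obtain e where e: "e > 0" "\<forall>h>0. h < e \<longrightarrow> f' 0 < f' (0 + h)"
    using DERIV_pos_inc_right[OF d2 c] by blast
  define h where "h = min d e / 2"
  have h: "0 < h" "h < d" "h < e" using d e by (auto simp: h_def)
  have "\<forall>x. 0 \<le> x \<and> x \<le> h \<longrightarrow> (f has_real_derivative f' x) (at x)"
    using h by (intro allI impI df) auto
  then obtain z where z: "z > 0" "z < h" "f h - f 0 = (h - 0) * f' z"
    using MVT2[OF h(1)] by blast
  have "f' z > 0" using e z h f'0 by auto
  hence "(h - 0) * f' z > 0" using z h by (simp add: mult_pos_pos)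
  hence "f h > f 0" using z by linarith
  moreover have "f h \<le> f 0" using mx h by auto
  ultimately show False by simp
qed

lemma max_left_deriv:
  fixes G :: "real \<Rightarrow> real"
  assumes der: "(G has_real_derivative c) (at t1)" and d: "d > 0"
    and mx: "\<And>t. t1 - d < t \<Longrightarrow> t < t1 \<Longrightarrow> G t \<le> G t1"
  shows "c \<ge> 0"
proof (rule ccontr)
  assume "\<not> c \<ge> 0" hence c: "c < 0" by simp
  obtain e where e: "e > 0" "\<forall>h>0. h < e \<longrightarrow> G t1 < G (t1 - h)"
    using DERIV_neg_dec_left[OF der c] by blast
  define h where "h = min d e / 2"
  have h: "0 < h" "h < d" "h < e" using d e by (auto simp: h_def)
  have "G t1 < G (t1 - h)" using e h by auto
  moreover have "G (t1 - h) \<le> G t1" using mx h by auto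
  ultimately show False by simp
qed

lemma dir_deriv:
  fixes F :: "real^'n \<Rightarrow> 'b::real_normed_vector"
  assumes "(F has_derivative F') (at (x + s *\<^sub>R e))"
  shows "((\<lambda>s. F (x + s *\<^sub>R e)) has_derivative (\<lambda>h. h *\<^sub>R F' e)) (at s)"
proof -
  have l: "linear F'" using assms has_derivative_linear by blast
  have "((\<lambda>s. x + s *\<^sub>R e) has_derivative (\<lambda>h. h *\<^sub>R e)) (at s)"
    by (auto intro!: derivative_eq_intros)
  from diff_chain_at[OF this assms] show ?thesis
    by (simp add: o_def linear_scale[OF l])
qed

lemma dir_deriv_real:
  fixes F :: "real^'n \<Rightarrow> real"
  assumes "(F has_derivative (\<lambda>h. D \<bullet> h)) (at (x + s *\<^sub>R e))"
  shows "((\<lambda>s. F (x + s *\<^sub>R e)) has_real_derivative (D \<bullet> e)) (at s)"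
  using dir_deriv[OF assms] by (simp add: has_field_derivative_def mult.commute[of _ "D \<bullet> e"])

lemma dir_deriv_comp:
  fixes F :: "real^'n \<Rightarrow> real^'n"
  assumes "(F has_derivative (\<lambda>h. A *v h)) (at (x + s *\<^sub>R e))"
  shows "((\<lambda>s. F (x + s *\<^sub>R e) $ i) has_real_derivative ((A *v e) $ i)) (at s)"
proof -
  have "((\<lambda>s. F (x + s *\<^sub>R e) $ i) has_derivative (\<lambda>h. (h *\<^sub>R (A *v e)) $ i)) (at s)"
    using bounded_linear.has_derivative[OF bounded_linear_vec_nth dir_deriv[OF assms]] .
  thus ?thesis by (simp add: has_field_derivative_def mult.commute[of _ "(A *v e) $ i"])
qed

lemma axis_sq_sum: "(\<Sum>i\<in>UNIV. (axis i (1::real) $ k) * (axis i 1 $ k)) = 1"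
  by (simp add: axis_def if_distrib cong: if_cong)

lemma Hdiag: "(A *v axis i (1::real)) $ i = A $ i $ i"
  by (simp add: matrix_vector_mult_basis column_def)

lemma gaxis: "g \<bullet> axis i (1::real) = g $ i"
  by (simp add: inner_axis)

lemma norm_line: "(norm (x + s *\<^sub>R e - y))^2 = (norm (x - y))^2 + 2 * s * ((x - y) \<bullet> e) + s^2 * (norm e)^2"
proof -
  have "x + s *\<^sub>R e - y = (x - y) + s *\<^sub>R e" by simp
  thus ?thesis by (simp only: power2_norm_eq_inner) (simp add: inner_add_left inner_add_right algebra_simps power2_eq_square inner_commute)
qed


definition psi :: "'n::finite \<Rightarrow> real^'n \<Rightarrow> real \<Rightarrow> real \<Rightarrow> real \<Rightarrow> real \<Rightarrow> real \<Rightarrow> real^'n \<Rightarrow> real \<Rightarrow> real" where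
 "psi k x0 T R L M \<eta> x t = M/R * x$k + M/L^2 * (norm (x - x0))^2 + M/L^2 * (2 * real CARD('n)) * (t - T)
    + 4*M/R^2 * exp (-(4/R^2)*(t-T)) * (R^2/2 - (x$k - R/2)^2) + \<eta>*(t-T)"

lemma h_bounds:
  fixes R y :: real assumes "0 \<le> y" "y \<le> R"
  shows "R^2/4 \<le> R^2/2 - (y - R/2)^2" "R^2/2 - (y - R/2)^2 \<le> R^2/2"
proof -
  have "\<bar>y - R/2\<bar> \<le> \<bar>R/2\<bar>" using assms by (auto simp: abs_le_iff abs_if)
  hence "(y - R/2)^2 \<le> (R/2)^2" using abs_le_square_iff by blast
  thus "R^2/4 \<le> R^2/2 - (y - R/2)^2" by (simp add: power_divide)
  show "R^2/2 - (y - R/2)^2 \<le> R^2/2" by simp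
qed

lemma comparison:
  fixes u :: "real^'n::finite \<Rightarrow> real \<Rightarrow> real" and k :: 'n
  assumes dU: "\<forall>(x,t)\<in>halfQ k.
            ((\<lambda>y. u y t) has_derivative (\<lambda>h. g x t \<bullet> h)) (at x) \<and>
            ((\<lambda>y. g y t) has_derivative (\<lambda>h. H x t *v h)) (at x) \<and>
            ((\<lambda>s. u x s) has_real_derivative ut x t) (at t)"
  and pde: "\<forall>(x,t)\<in>halfQ k. ut x t - (\<Sum>i\<in>UNIV. H x t $ i $ i) = norm (g x t) powr p"
  and cont: "continuous_on (halfQ_closure k) (\<lambda>(x,t). u x t)"
  and bd0: "\<forall>x t. x $ k = 0 \<and> t < 0 \<longrightarrow> u x t = 0"
  and bnd: "\<And>x t. 0 < x$k \<Longrightarrow> x$k \<le> R \<Longrightarrow> t \<le> t0 \<Longrightarrow> -u x t \<le> M"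
  and R: "R > 0" and L: "L > 0" and T: "T < t0" and t0: "t0 < 0" and M: "M \<ge> 0" and eta: "\<eta> > 0"
  and x0: "0 \<le> x0$k" "x0$k \<le> R"
  shows "- u x0 t0 \<le> psi k x0 T R L M \<eta> x0 t0"
proof -
  define w where "w = (\<lambda>(x,t). - u x t - psi k x0 T R L M \<eta> x t)"
  define K where "K = ({x. 0 \<le> x$k \<and> x$k \<le> R} \<inter> cball x0 L) \<times> {T..t0}"
  have cK: "compact K" unfolding K_def
    by (intro compact_Times closed_Int_compact closed_Collect_conj closed_Collect_le continuous_intros compact_cball compact_Icc)
  have x0K: "(x0,t0) \<in> K" using x0 L T by (auto simp: K_def)
  have KQ: "K \<subseteq> halfQ_closure k" using t0 by (auto simp: K_def halfQ_closure_def)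
  have cw: "continuous_on K w"
    unfolding w_def psi_def case_prod_unfold
    by (intro continuous_intros continuous_on_subset[OF cont[unfolded case_prod_unfold] KQ])
  obtain z where zK: "z \<in> K" and zmax: "\<forall>y\<in>K. w y \<le> w z"
    using continuous_attains_sup[OF cK _ cw] x0K by blast
  obtain x1 t1 where z: "z = (x1,t1)" by (cases z)
  have "w z \<le> 0"
  proof (rule ccontr)
    assume pos: "\<not> w z \<le> 0"
    have x1: "0 \<le> x1$k" "x1$k \<le> R" "norm (x1 - x0) \<le> L" "T \<le> t1" "t1 \<le> t0"
      using zK by (auto simp: K_def z dist_norm norm_minus_commute)
    define h1 where "h1 = R^2/2 - (x1$k - R/2)^2"
    define E1 where "E1 = exp (-(4/R^2)*(t1-T))"
    have h1: "R^2/4 \<le> h1" "h1 \<le> R^2/2" using h_bounds[OF x1(1,2)] by (auto simp: h1_def)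
    have E1: "E1 > 0" by (simp add: E1_def)
    define P1 where "P1 = M/R * x1$k"
    define P2 where "P2 = M/L^2 * (norm (x1 - x0))^2"
    define P3 where "P3 = M/L^2 * (2 * real CARD('n)) * (t1 - T)"
    define P4 where "P4 = 4*M/R^2 * E1 * h1"
    define P5 where "P5 = \<eta>*(t1-T)"
    have psiP: "psi k x0 T R L M \<eta> x1 t1 = P1 + P2 + P3 + P4 + P5"
      by (simp add: psi_def P1_def P2_def P3_def P4_def P5_def E1_def h1_def)
    have P: "P1 \<ge> 0" "P2 \<ge> 0" "P3 \<ge> 0" "P4 \<ge> 0" "P5 \<ge> 0"
      using M R L x1 E1 h1 eta
      by (auto simp: P1_def P2_def P3_def P4_def P5_def intro!: mult_nonneg_nonneg divide_nonneg_pos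
          order_trans[OF _ h1(1)])
    have wz: "w z = - u x1 t1 - (P1 + P2 + P3 + P4 + P5)" by (simp add: w_def z psiP)
    show False
    proof (cases "x1$k = 0")
      case True
      hence "u x1 t1 = 0" using bd0 x1 t0 by auto
      thus False using pos wz P by linarith
    next
      case False
      hence xk: "0 < x1$k" using x1 by auto
      have vb: "- u x1 t1 \<le> M" using bnd[OF xk x1(2,5)] .
      show False
      proof (cases "x1$k = R")
        case True
        hence "P1 = M" using R by (simp add: P1_def)
        thus False using pos wz P vb by linarith
      next
        case False
        hence xkR: "x1$k < R" using x1 by auto
        show False
        proof (cases "norm (x1 - x0) = L")
          case True
          hence "P2 = M" using L by (simp add: P2_def)
          thus False using pos wz P vb by linarith
        next
          case False
          hence nL: "norm (x1 - x0) < L" using x1 by auto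
          show False
          proof (cases "t1 = T")
            case True
            hence "E1 = 1" by (simp add: E1_def)
            have "4*h1/R^2 \<ge> 1" using h1 R by (simp add: field_simps)
            hence "M * 1 \<le> M * (4*h1/R^2)" using M by (intro mult_left_mono) auto
            hence "P4 \<ge> M" using \<open>E1 = 1\<close> by (simp add: P4_def algebra_simps)
            thus False using pos wz P vb by linarith
          next
            case False
            hence tT: "T < t1" using x1 by auto
            have inQ: "(x1,t1) \<in> halfQ k" using xk x1 t0 by (auto simp: halfQ_def)
            define A where "A = 4*M/R^2*E1"
            have A: "A \<ge> 0" using M R E1 by (simp add: A_def)
            have spat: "2*A*(axis i (1::real) $ k * axis i 1 $ k) \<le> H x1 t1 $ i $ i + 2*M/L^2" for i
            proof -
              define e where "e = (axis i (1::real) :: real^'n)"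
              define c where "c = e $ k"
              have c: "\<bar>c\<bar> \<le> 1" by (simp add: c_def e_def axis_def)
              have ne: "norm e = 1" by (simp add: e_def)
              define d where "d = min (x1$k) (min (R - x1$k) (L - norm (x1 - x0)))"
              have d: "d > 0" using xk xkR nL by (simp add: d_def)
              define N where "N = (norm (x1 - x0))^2"
              define Pe where "Pe = (x1 - x0) \<bullet> e"
              define a1 where "a1 = M/R"
              define b1 where "b1 = M/L^2"
              define Q where "Q = (\<lambda>s. a1 * (x1$k + s*c) + b1 * (N + 2* s*Pe + s^2) + P3
                    + A*(R^2/2 - (x1$k + s*c - R/2)^2) + P5)"
              have psiQ: "psi k x0 T R L M \<eta> (x1 + s *\<^sub>R e) t1 = Q s" for s
                using norm_line[of x1 s e x0] ne
                by (simp add: psi_def Q_def c_def N_def Pe_def P3_def P5_def E1_def A_def a1_def b1_def)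
              define f where "f = (\<lambda>s. - u (x1 + s *\<^sub>R e) t1 - Q s)"
              have comp: "(x1 + s *\<^sub>R e) $ k = x1$k + s*c" for s by (simp add: c_def)
              have sc: "\<bar>s*c\<bar> \<le> \<bar>s\<bar>" for s using c by (simp add: abs_mult mult_left_le)
              have inK: "(x1 + s *\<^sub>R e, t1) \<in> K" if s: "\<bar>s\<bar> < d" for s
              proof -
                have "norm (x1 + s *\<^sub>R e - x0) = norm ((x1 - x0) + s *\<^sub>R e)" by (simp add: algebra_simps)
                also have "\<dots> \<le> norm (x1 - x0) + norm (s *\<^sub>R e)" by (rule norm_triangle_ineq)
                also have "\<dots> = norm (x1 - x0) + \<bar>s\<bar>" using ne by simp
                finally have "norm (x1 + s *\<^sub>R e - x0) \<le> L" using s by (simp add: d_def)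
                moreover have "0 \<le> x1$k + s*c" "x1$k + s*c \<le> R" using s sc[of s] by (auto simp: d_def abs_le_iff)
                ultimately show ?thesis using x1 by (auto simp: K_def dist_norm norm_minus_commute c_def)
              qed
              have inQs: "(x1 + s *\<^sub>R e, t1) \<in> halfQ k" if s: "\<bar>s\<bar> < d" for s
                using s sc[of s] x1 t0 by (auto simp: halfQ_def c_def d_def abs_le_iff)
              have fmax: "f s \<le> f 0" if s: "\<bar>s\<bar> < d" for s
              proof -
                have "w (x1 + s *\<^sub>R e, t1) \<le> w z" using zmax inK[OF s] by blast
                thus ?thesis using psiQ[of s] psiQ[of 0] by (simp add: w_def z f_def)
              qed
              define Q' where "Q' = (\<lambda>s. a1*c + b1*(2*Pe + 2* s) - A*(2*(x1$k + s*c - R/2)*c))"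
              define f' where "f' = (\<lambda>s. - (g (x1 + s *\<^sub>R e) t1 $ i) - Q' s)"
              have dQ: "(Q has_real_derivative Q' s) (at s)" for s
                unfolding Q_def Q'_def
                by (auto intro!: derivative_eq_intros simp: algebra_simps)
              have df: "(f has_real_derivative f' s) (at s)" if s: "\<bar>s\<bar> < d" for s
              proof -
                have "((\<lambda>y. u y t1) has_derivative (\<lambda>h. g (x1 + s *\<^sub>R e) t1 \<bullet> h)) (at (x1 + s *\<^sub>R e))"
                  using dU inQs[OF s] by auto
                from dir_deriv_real[OF this]
                have du: "((\<lambda>s. u (x1 + s *\<^sub>R e) t1) has_real_derivative (g (x1 + s *\<^sub>R e) t1 $ i)) (at s)"
                  by (simp add: e_def gaxis)
                show ?thesis unfolding f_def f'_def
                  by (intro derivative_intros du dQ)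
              qed
              have dg0: "((\<lambda>y. g y t1) has_derivative (\<lambda>h. H x1 t1 *v h)) (at (x1 + 0 *\<^sub>R e))"
                using dU inQ by auto
              have d2: "(f' has_real_derivative (- (H x1 t1 $ i $ i) - (b1*2 - A*(2*c*c)))) (at 0)"
              proof -
                have "((\<lambda>s. g (x1 + s *\<^sub>R e) t1 $ i) has_real_derivative ((H x1 t1 *v e) $ i)) (at 0)"
                  by (rule dir_deriv_comp[OF dg0])
                hence dg: "((\<lambda>s. g (x1 + s *\<^sub>R e) t1 $ i) has_real_derivative (H x1 t1 $ i $ i)) (at 0)"
                  by (simp add: e_def Hdiag)
                have dQ': "(Q' has_real_derivative (b1*2 - A*(2*c*c))) (at 0)"
                  unfolding Q'_def by (auto intro!: derivative_eq_intros simp: algebra_simps)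
                show ?thesis unfolding f'_def by (intro derivative_intros dg dQ')
              qed
              have "- (H x1 t1 $ i $ i) - (b1*2 - A*(2*c*c)) \<le> 0"
                by (rule max_second_deriv[OF d df d2 fmax])
              thus ?thesis by (simp add: c_def e_def b1_def algebra_simps)
            qed
            have "(\<Sum>i\<in>UNIV. 2*A*(axis i (1::real) $ k * axis i 1 $ k)) \<le> (\<Sum>i\<in>UNIV. H x1 t1 $ i $ i + 2*M/L^2)"
              by (rule sum_mono) (rule spat)
            moreover have "(\<Sum>i\<in>UNIV. 2*A*(axis i (1::real) $ k * axis i 1 $ k)) = 2*A"
              by (simp only: sum_distrib_left[symmetric] axis_sq_sum mult_1_right)
            moreover have "(\<Sum>i\<in>UNIV. H x1 t1 $ i $ i + 2*M/L^2) = (\<Sum>i\<in>UNIV. H x1 t1 $ i $ i) + real CARD('n) * (2*M/L^2)"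
              by (simp add: sum.distrib)
            ultimately have trH: "2*A \<le> (\<Sum>i\<in>UNIV. H x1 t1 $ i $ i) + real CARD('n) * (2*M/L^2)" by simp
            define G where "G = (\<lambda>t. - u x1 t - psi k x0 T R L M \<eta> x1 t)"
            have dpsi: "((\<lambda>t. psi k x0 T R L M \<eta> x1 t) has_real_derivative
                 (real CARD('n) * (2*M/L^2) - A*((4/R^2)*h1) + \<eta>)) (at t1)"
            proof -
              define b1 where "b1 = M/L^2"
              define B0 where "B0 = 4*M/R^2"
              define lam where "lam = 4/R^2"
              define C0 where "C0 = M/R * x1$k + M/L^2 * (norm (x1 - x0))^2"
              have eq: "(\<lambda>t. psi k x0 T R L M \<eta> x1 t) = (\<lambda>t. C0 + b1 * (2 * real CARD('n)) * (t - T)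
                   + B0 * exp (-lam*(t-T)) * h1 + \<eta>*(t-T))"
                by (rule ext) (simp add: psi_def C0_def b1_def B0_def lam_def h1_def)
              have "((\<lambda>t. C0 + b1 * (2 * real CARD('n)) * (t - T)
                   + B0 * exp (-lam*(t-T)) * h1 + \<eta>*(t-T)) has_real_derivative
                   (b1 * (2 * real CARD('n)) + B0 * (exp (-lam*(t1-T)) * (-lam)) * h1 + \<eta>)) (at t1)"
                by (auto intro!: derivative_eq_intros)
              moreover have "b1 * (2 * real CARD('n)) + B0 * (exp (-lam*(t1-T)) * (-lam)) * h1 + \<eta>
                 = real CARD('n) * (2*M/L^2) - A*((4/R^2)*h1) + \<eta>"
                by (simp add: b1_def B0_def lam_def A_def E1_def algebra_simps)
              ultimately show ?thesis by (simp only: eq)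
            qed
            have dG: "(G has_real_derivative (- ut x1 t1 - (real CARD('n) * (2*M/L^2) - A*((4/R^2)*h1) + \<eta>))) (at t1)"
            proof -
              have dut: "((\<lambda>s. u x1 s) has_real_derivative ut x1 t1) (at t1)" using dU inQ by auto
              show ?thesis unfolding G_def by (rule DERIV_diff[OF DERIV_minus[OF dut] dpsi])
            qed
            have Gmax: "G t \<le> G t1" if "t1 - (t1 - T) < t" "t < t1" for t
            proof -
              have "(x1, t) \<in> K" using that x1 by (auto simp: K_def dist_norm norm_minus_commute)
              hence "w (x1, t) \<le> w z" using zmax by blast
              thus ?thesis by (simp add: w_def z G_def)
            qed
            have Gd: "- ut x1 t1 - (real CARD('n) * (2*M/L^2) - A*((4/R^2)*h1) + \<eta>) \<ge> 0"
              by (rule max_left_deriv[OF dG, of "t1 - T"]) (use tT Gmax in auto)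
            have "ut x1 t1 - (\<Sum>i\<in>UNIV. H x1 t1 $ i $ i) = norm (g x1 t1) powr p" using pde inQ by auto
            hence "ut x1 t1 - (\<Sum>i\<in>UNIV. H x1 t1 $ i $ i) \<ge> 0" by simp
            moreover have "(4/R^2)*h1 \<le> 2" using h1 R by (simp add: field_simps)
            hence "A*((4/R^2)*h1) \<le> A*2" using A by (intro mult_left_mono) auto
            ultimately show False using trH Gd eta by linarith
          qed
        qed
      qed
    qed
  qed
  then show ?thesis using zmax x0K by (auto simp: w_def z)
qed


theorem proposition5p5:
  fixes p :: real and k :: "'n::finite" and u :: "real^'n \<Rightarrow> real \<Rightarrow> real"
  assumes "1 < p" "p < 2"
    and "ancient_half_space_solution p k u"
    and "\<forall>\<epsilon>>0.
           (\<forall>\<^sub>F R in at_top. bdd_below ((\<lambda>(x,t). u x t) ` strip_set k R \<epsilon>)) \<and>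
           ((\<lambda>R. Inf ((\<lambda>(x,t). u x t) ` strip_set k R \<epsilon>) / R) \<longlongrightarrow> 0) at_top"
  shows "\<forall>x t. 0 < x $ k \<and> t < 0 \<longrightarrow> u x t \<ge> 0"
proof (intro allI impI)
  fix x0 :: "real^'n" and t0 :: real assume "0 < x0 $ k \<and> t0 < 0"
  hence xk: "0 < x0$k" and t0: "t0 < 0" by auto
  obtain g H ut where dU: "\<forall>(x,t)\<in>halfQ k.
            ((\<lambda>y. u y t) has_derivative (\<lambda>h. g x t \<bullet> h)) (at x) \<and>
            ((\<lambda>y. g y t) has_derivative (\<lambda>h. H x t *v h)) (at x) \<and>
            ((\<lambda>s. u x s) has_real_derivative ut x t) (at t)"
    and pde: "\<forall>(x,t)\<in>halfQ k. ut x t - (\<Sum>i\<in>UNIV. H x t $ i $ i) = norm (g x t) powr p"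
    and cont: "continuous_on (halfQ_closure k) (\<lambda>(x,t). u x t)"
    and bd0: "\<forall>x t. x $ k = 0 \<and> t < 0 \<longrightarrow> u x t = 0"
    using assms(3) unfolding ancient_half_space_solution_def by blast
  show "u x0 t0 \<ge> 0"
  proof (rule ccontr)
    assume "\<not> u x0 t0 \<ge> 0"
    define \<delta> where "\<delta> = - u x0 t0"
    have \<delta>: "\<delta> > 0" using \<open>\<not> u x0 t0 \<ge> 0\<close> by (simp add: \<delta>_def)
    define S where "S = (\<lambda>R. (\<lambda>(x,t). u x t) ` strip_set k R (-t0))"
    have ev: "\<forall>\<^sub>F R in at_top. bdd_below (S R)" and lim: "((\<lambda>R. Inf (S R) / R) \<longlongrightarrow> 0) at_top"
      using assms(4) t0 by (auto simp: S_def)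
    define c where "c = \<delta>/(8*(x0$k+1))"
    have c: "c > 0" using \<delta> xk by (simp add: c_def)
    have ev2: "\<forall>\<^sub>F R in at_top. \<bar>Inf (S R) / R\<bar> < c"
      using lim c by (auto simp: tendsto_iff dist_real_def)
    have "\<forall>\<^sub>F R in at_top. bdd_below (S R) \<and> \<bar>Inf (S R) / R\<bar> < c \<and> R > 2*x0$k + 1"
      using ev ev2 eventually_gt_at_top[of "2*x0$k + 1"] by (intro eventually_conj) auto
    then obtain R' where R': "bdd_below (S R')" "\<bar>Inf (S R') / R'\<bar> < c" "R' > 2*x0$k + 1"
      by (metis (no_types, lifting) eventually_at_top_linorder order_refl)
    define R where "R = R'/2"
    define M where "M = \<bar>Inf (S R')\<bar>"
    have R: "R > 0" "x0$k \<le> R" using R' xk by (auto simp: R_def)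
    have M: "M \<ge> 0" by (simp add: M_def)
    have MR: "M/R' < c" using R' xk by (simp add: M_def abs_divide)
    have bnd: "-u x t \<le> M" if "0 < x$k" "x$k \<le> R" "t \<le> t0" for x t
    proof -
      have "(x,t) \<in> strip_set k R' (-t0)" using that R R' by (auto simp: strip_set_def R_def)
      hence "u x t \<in> S R'" by (force simp: S_def)
      hence "Inf (S R') \<le> u x t" using R'(1) by (rule cInf_lower)
      thus ?thesis by (simp add: M_def)
    qed
    define T where "T = t0 - (R^2/4)*(8*M/\<delta> + 1)"
    have "8*M/\<delta> \<ge> 0" using M \<delta> by simp
    hence T: "T < t0" using R by (simp add: T_def)
    define D where "D = real CARD('n) * 2 * M * (t0 - T)"
    have D: "D \<ge> 0" using M T by (simp add: D_def)
    define L where "L = 1 + 4*D/\<delta>"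
    have L: "L \<ge> 1" using D \<delta> by (simp add: L_def)
    define \<eta> where "\<eta> = \<delta>/(8*(t0 - T))"
    have \<eta>: "\<eta> > 0" using \<delta> T by (simp add: \<eta>_def)
    have cmp: "- u x0 t0 \<le> psi k x0 T R L M \<eta> x0 t0"
      by (rule comparison[OF dU pde cont bd0 bnd R(1) _ T t0 M \<eta>]) (use L xk R in auto)
    define h0 where "h0 = R^2/2 - (x0$k - R/2)^2"
    define E where "E = exp (-(4/R^2)*(t0-T))"
    have psi0: "psi k x0 T R L M \<eta> x0 t0 = M/R * x0$k + D/L^2 + 4*M/R^2*E*h0 + \<eta>*(t0-T)"
      by (simp add: psi_def D_def E_def h0_def algebra_simps)
    have b1: "M/R * x0$k \<le> \<delta>/4"
    proof -
      have "M/R = 2*(M/R')" by (simp add: R_def)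
      hence "M/R \<le> 2*c" using MR by simp
      hence "M/R * x0$k \<le> 2*c * x0$k" using xk by (intro mult_right_mono) auto
      also have "2*c*x0$k \<le> \<delta>/4" using xk \<delta> by (simp add: c_def field_simps)
      finally show ?thesis .
    qed
    have b2: "D/L^2 \<le> \<delta>/4"
    proof -
      have "L \<le> L^2" using L by (simp add: power2_eq_square)
      hence "D/L^2 \<le> D/L" using L D by (intro divide_left_mono) auto
      also have "D/L \<le> \<delta>/4" using D \<delta> by (simp add: L_def field_simps)
      finally show ?thesis .
    qed
    have b3: "4*M/R^2*E*h0 \<le> \<delta>/4"
    proof -
      have h0: "h0 \<le> R^2/2" using h_bounds(2)[of "x0$k" R] xk R by (simp add: h0_def)
      have E0: "E \<ge> 0" by (simp add: E_def)
      have "4*M/R^2*E*h0 \<le> 4*M/R^2*E*(R^2/2)" using h0 E0 M by (intro mult_left_mono) auto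
      also have "\<dots> = 2*M*E" using R by (simp add: field_simps)
      finally have st1: "4*M/R^2*E*h0 \<le> 2*M*E" .
      have Eeq: "E = exp (-(8*M/\<delta> + 1))" using R by (simp add: E_def T_def field_simps)
      have ebd: "exp (-(8*M/\<delta> + 1)) \<le> 1/(1 + (8*M/\<delta> + 1))"
      proof -
        have "1 + (8*M/\<delta> + 1) \<le> exp (8*M/\<delta> + 1)" by (rule exp_ge_add_one_self)
        moreover have "0 < 1 + (8*M/\<delta> + 1)" using M \<delta> by (simp add: add_pos_nonneg)
        ultimately have "inverse (exp (8*M/\<delta> + 1)) \<le> inverse (1 + (8*M/\<delta> + 1))"
          by (intro le_imp_inverse_le) auto
        thus ?thesis by (metis exp_minus inverse_eq_divide)
      qed
      have "2*M*E \<le> 2*M*(1/(1 + (8*M/\<delta> + 1)))" unfolding Eeq using M ebd by (intro mult_left_mono) auto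
      also have "\<dots> \<le> \<delta>/4" using M \<delta> by (simp add: field_simps)
      finally show ?thesis using st1 by linarith
    qed
    have b4: "\<eta>*(t0-T) = \<delta>/8" using T by (simp add: \<eta>_def field_simps)
    show False using cmp psi0 b1 b2 b3 b4 \<delta> by (simp add: \<delta>_def[symmetric])
  qed
qed

end
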